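(* In the setting below, for all $a,b,c\in A$, $$\sum_{x\in M}\ell_a(x)\ell_b(x)\ell_c(x)=\begin{cases}-1 & a=b=c\in B,\\ 0&\text{otherwise.}\end{cases}$$
   Context: Let $q=2^l$ ($l\ge2$) and $\mathbb F_q$ the field with $q$ elements. Fix integers $k,m,s$ with $q/3\ge k\ge m\ge s>0$ and $2k\le q-m$. Fix $A\subseteq\mathbb F_q$ with $|A|=k$, $B\subseteq A$ with $|B|=s$, and let $M=\mathbb F_q\setminus B$. For $a\in A$, the Lagrange interpolation polynomial is $\ell_a(x)=\prod_{a'\in A\setminus\{a\}}\frac{x-a'}{a-a'}$. *)

theory Defs
  imports Main
begin

definition lagrange_basis :: "'a::field set \<Rightarrow> 'a \<Rightarrow> 'a \<Rightarrow> 'a" where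
  "lagrange_basis A a x = (\<Prod>a'\<in>A - {a}. (x - a') / (a - a'))"

end

theory Submission
  imports Defs "HOL-Computational_Algebra.Polynomial"
begin

lemma card_one_zero: "of_nat (card (UNIV :: 'a::{field,finite} set)) = (0::'a)"
proof -
  have "(\<Sum>x\<in>UNIV. x) = (\<Sum>x\<in>UNIV. (x + 1::'a))"
    by (rule sum.reindex_bij_witness[where j="\<lambda>x. x - 1" and i="\<lambda>x. x + 1"]) auto
  also have "\<dots> = (\<Sum>x\<in>UNIV. x) + of_nat (card (UNIV :: 'a set))"
    by (simp add: sum.distrib)
  finally show ?thesis by simp
qed

lemma power_sum_zero:
  assumes "j + 1 < card (UNIV :: 'a set)"
  shows "(\<Sum>x\<in>UNIV. (x::'a::{field,finite}) ^ j) = 0"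
proof (cases "j = 0")
  case True thus ?thesis using card_one_zero by simp
next
  case False
  define p :: "'a poly" where "p = monom 1 j + [:-1:]"
  have dp: "degree p = j" using False unfolding p_def
    by (subst degree_add_eq_left) (simp_all add: degree_monom_eq)
  have p0: "p \<noteq> 0" using dp False by auto
  have "card {x. poly p x = 0} \<le> j" using card_poly_roots_bound[OF p0] dp by simp
  moreover have "card (UNIV - {0::'a}) = card (UNIV :: 'a set) - 1" by (simp add: card_Diff_subset)
  ultimately have "\<not> (UNIV - {0::'a}) \<subseteq> {x. poly p x = 0}"
  proof (intro notI)
    assume "UNIV - {0::'a} \<subseteq> {x. poly p x = 0}"
    hence "card (UNIV - {0::'a}) \<le> card {x. poly p x = 0}" by (intro card_mono) auto
    thus False using assms \<open>card {x. poly p x = 0} \<le> j\<close> \<open>card (UNIV - {0::'a}) = _\<close> by linarith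
  qed
  then obtain c where c: "c \<noteq> 0" "poly p c \<noteq> 0" by auto
  hence cj: "c ^ j \<noteq> 1" unfolding p_def by (simp add: poly_monom)
  have "(\<Sum>x\<in>UNIV. x ^ j) = (\<Sum>x\<in>UNIV. (c * x) ^ j)"
    by (rule sum.reindex_bij_witness[where j="\<lambda>x. x / c" and i="\<lambda>x. c * x"]) (use c in auto)
  also have "\<dots> = c ^ j * (\<Sum>x\<in>UNIV. x ^ j)"
    by (simp add: power_mult_distrib sum_distrib_left)
  finally have "(c ^ j - 1) * (\<Sum>x\<in>UNIV. x ^ j) = 0" by (simp add: algebra_simps)
  thus ?thesis using cj by simp
qed

lemma poly_sum_zero:
  fixes p :: "'a::{field,finite} poly"
  assumes "degree p + 1 < card (UNIV :: 'a set)"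
  shows "(\<Sum>x\<in>UNIV. poly p x) = 0"
proof -
  have "(\<Sum>x\<in>UNIV. poly p x) = (\<Sum>x\<in>UNIV. \<Sum>i\<le>degree p. coeff p i * x ^ i)"
    by (simp add: poly_altdef)
  also have "\<dots> = (\<Sum>i\<le>degree p. coeff p i * (\<Sum>x\<in>UNIV. x ^ i))"
    by (subst sum.swap) (simp add: sum_distrib_left)
  also have "\<dots> = 0"
  proof (intro sum.neutral ballI)
    fix i assume "i \<in> {..degree p}"
    hence "i + 1 < card (UNIV :: 'a set)" using assms by auto
    thus "coeff p i * (\<Sum>x\<in>UNIV. x ^ i) = 0" by (simp add: power_sum_zero)
  qed
  finally show ?thesis .
qed

definition Lp :: "'a::field set \<Rightarrow> 'a \<Rightarrow> 'a poly" where
  "Lp A a = smult (inverse (\<Prod>a'\<in>A - {a}. a - a')) (\<Prod>a'\<in>A - {a}. [:-a', 1:])"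

lemma poly_Lp: "finite A \<Longrightarrow> poly (Lp A a) x = lagrange_basis A a x"
proof -
  have "(\<Prod>a'\<in>A - {a}. (x - a') / (a - a')) = (\<Prod>a'\<in>A - {a}. x - a') / (\<Prod>a'\<in>A - {a}. a - a')"
    by (rule prod_dividef)
  thus ?thesis unfolding Lp_def lagrange_basis_def
    by (simp add: poly_prod divide_inverse mult.commute)
qed

lemma degree_Lp: "finite A \<Longrightarrow> a \<in> A \<Longrightarrow> degree (Lp A a) \<le> card A - 1"
proof -
  assume f: "finite A" and aA: "a \<in> A"
  have "degree (Lp A a) \<le> degree (\<Prod>a'\<in>A - {a}. [:-a', 1:])"
    unfolding Lp_def by simp
  also have "\<dots> \<le> (\<Sum>a'\<in>A - {a}. degree [:-a', 1:])"
    using degree_prod_sum_le[of "A - {a}" "\<lambda>a'. [:-a', 1:]"] f by (simp add: o_def)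
  also have "\<dots> = card (A - {a})" by simp
  also have "\<dots> \<le> card A - 1"
    by (simp add: card_Diff_singleton_if f aA)
  finally show ?thesis .
qed

lemma lb_node:
  assumes "finite A" "x \<in> A" "a \<in> A"
  shows "lagrange_basis A a x = (if x = a then 1 else 0)"
proof (cases "x = a")
  case True thus ?thesis unfolding lagrange_basis_def by (auto intro!: prod.neutral split: if_splits)
next
  case False
  have "(\<Prod>a'\<in>A - {a}. (x - a') / (a - a')) = 0"
    using False assms by (intro prod_zero) (auto intro!: bexI[where x=x])
  thus ?thesis unfolding lagrange_basis_def using False by simp
qed

theorem lemma5p8:
  fixes A B M :: "'a::{field,finite} set"
    and l k m s :: nat
  assumes q: "card (UNIV :: 'a set) = 2 ^ l" and l: "l \<ge> 2"
    and kq: "3 * k \<le> card (UNIV :: 'a set)"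
    and km: "k \<ge> m" and ms: "m \<ge> s" and s: "s > 0"
    and k2: "2 * k \<le> card (UNIV :: 'a set) - m"
    and A: "card A = k"
    and B: "B \<subseteq> A" "card B = s"
    and M: "M = UNIV - B"
    and abc: "a \<in> A" "b \<in> A" "c \<in> A"
  shows "(\<Sum>x\<in>M. lagrange_basis A a x * lagrange_basis A b x * lagrange_basis A c x)
           = (if a = b \<and> b = c \<and> a \<in> B then -1 else 0)"
proof -
  have fA: "finite A" by simp
  define f where "f x = lagrange_basis A a x * lagrange_basis A b x * lagrange_basis A c x" for x
  define P where "P = Lp A a * Lp A b * Lp A c"
  have Pf: "poly P x = f x" for x unfolding P_def f_def by (simp add: poly_Lp)
  have "degree P \<le> 3 * (k - 1)"
  proof -
    have "degree P \<le> degree (Lp A a) + degree (Lp A b) + degree (Lp A c)"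
      unfolding P_def by (meson add_le_mono degree_mult_le le_trans order_refl)
    thus ?thesis using degree_Lp[OF fA abc(1)] degree_Lp[OF fA abc(2)] degree_Lp[OF fA abc(3)] A
      by linarith
  qed
  moreover have "k \<ge> 1" using A abc proof -
    have "A \<noteq> {}" using abc by auto
    thus ?thesis using A card_gt_0_iff[of A] by simp
  qed
  ultimately have "degree P + 1 < card (UNIV :: 'a set)" using kq by linarith
  hence tot: "(\<Sum>x\<in>UNIV. f x) = 0" using poly_sum_zero[of P] Pf by simp
  have split: "(\<Sum>x\<in>UNIV. f x) = (\<Sum>x\<in>M. f x) + (\<Sum>x\<in>B. f x)"
    unfolding M using sum.subset_diff[of B UNIV f] by (simp add: add.commute)
  have "(\<Sum>x\<in>B. f x) = (\<Sum>x\<in>B. if x = a \<and> x = b \<and> x = c then 1 else 0)"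
  proof (rule sum.cong)
    fix x assume "x \<in> B"
    hence xA: "x \<in> A" using B by auto
    show "f x = (if x = a \<and> x = b \<and> x = c then 1 else 0)"
      by (simp add: f_def lb_node[OF fA xA abc(1)] lb_node[OF fA xA abc(2)] lb_node[OF fA xA abc(3)])
  qed simp
  also have "\<dots> = (if a = b \<and> b = c \<and> a \<in> B then 1 else 0)"
  proof (cases "a = b \<and> b = c \<and> a \<in> B")
    case True thus ?thesis by (simp add: sum.delta')
  next
    case False thus ?thesis by (auto intro!: sum.neutral)
  qed
  finally have hB: "(\<Sum>x\<in>B. f x) = (if a = b \<and> b = c \<and> a \<in> B then 1 else 0)" .
  have "(\<Sum>x\<in>M. f x) = - (\<Sum>x\<in>B. f x)" using tot split by (simp add: eq_neg_iff_add_eq_0)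
  hence "(\<Sum>x\<in>M. f x) = (if a = b \<and> b = c \<and> a \<in> B then -1 else 0)" using hB by auto
  thus ?thesis unfolding f_def .
qed

end
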